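(* Let $(X,d)$ be a nonempty compact homogeneous metric space of diameter $D$, and let $m$ be a Borel probability measure on $X$ invariant under all isometries. Let $A=\int_{X\times X} d(x,y)\,d(m\times m)(x,y)$. Then $A=\frac{D}{2}$ if and only if $X$ is strictly antipodal.
   Context: A metric space is homogeneous if its isometry group acts transitively on its points. Let $X$ be a compact metric space of diameter $D=\sup_{x,y}d(x,y)$. $X$ is called antipodal if for every $x\in X$ there exists at least one point $O_x\in X$ (an antipode of $x$) with $d(x,O_x)=D$ such that there is an isometry of $X$ mapping $x$ to $O_x$. $X$ is called strictly antipodal if it is antipodal and, for every $x\in X$ and every antipode $O_x$ of $x$, one has $D=d(x,y)+d(y,O_x)$ for all $y\in X$. *)

theory Defs
  imports "HOL-Analysis.Analysis" "HOL-Probability.Probability"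
begin

definition isometry_of :: "'a::metric_space set \<Rightarrow> ('a \<Rightarrow> 'a) \<Rightarrow> bool" where
  "isometry_of X f \<longleftrightarrow> bij_betw f X X \<and> (\<forall>x\<in>X. \<forall>y\<in>X. dist (f x) (f y) = dist x y)"

definition homogeneous :: "'a::metric_space set \<Rightarrow> bool" where
  "homogeneous X \<longleftrightarrow> (\<forall>x\<in>X. \<forall>y\<in>X. \<exists>f. isometry_of X f \<and> f x = y)"

definition is_antipode :: "'a::metric_space set \<Rightarrow> 'a \<Rightarrow> 'a \<Rightarrow> bool" where
  "is_antipode X x p \<longleftrightarrow> p \<in> X \<and> dist x p = diameter X \<and> (\<exists>f. isometry_of X f \<and> f x = p)"

definition antipodal :: "'a::metric_space set \<Rightarrow> bool" where
  "antipodal X \<longleftrightarrow> (\<forall>x\<in>X. \<exists>p. is_antipode X x p)"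

definition strictly_antipodal :: "'a::metric_space set \<Rightarrow> bool" where
  "strictly_antipodal X \<longleftrightarrow> antipodal X \<and>
     (\<forall>x\<in>X. \<forall>p. is_antipode X x p \<longrightarrow> (\<forall>y\<in>X. diameter X = dist x y + dist y p))"

end

theory Submission
  imports Defs
begin

lemma compact_dense_countable:
  fixes X :: "'a::metric_space set"
  assumes "compact X"
  obtains D where "D \<subseteq> X" "countable D" "\<And>y e. y \<in> X \<Longrightarrow> e > 0 \<Longrightarrow> \<exists>z\<in>D. dist y z < e"
proof -
  have "\<forall>n::nat. \<exists>K. K \<subseteq> X \<and> finite K \<and> X \<subseteq> (\<Union>z\<in>K. ball z (1 / real (Suc n)))"
  proof
    fix n :: nat
    have cov: "X \<subseteq> (\<Union>z\<in>X. ball z (1 / real (Suc n)))" by auto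
    obtain K where "K \<subseteq> X" "finite K" "X \<subseteq> (\<Union>z\<in>K. ball z (1 / real (Suc n)))"
      by (rule compactE_image[OF assms _ cov]) auto
    then show "\<exists>K. K \<subseteq> X \<and> finite K \<and> X \<subseteq> (\<Union>z\<in>K. ball z (1 / real (Suc n)))"
      by blast
  qed
  then obtain K where K: "\<And>n. K n \<subseteq> X" "\<And>n. finite (K n)" "\<And>n. X \<subseteq> (\<Union>z\<in>K n. ball z (1 / real (Suc n)))"
    by metis
  show ?thesis
  proof (rule that[of "\<Union>n. K n"])
    show "(\<Union>n. K n) \<subseteq> X" using K by auto
    show "countable (\<Union>n. K n)" using K(2) by (simp add: countable_finite)
    fix y e assume y: "y \<in> X" and e: "(e::real) > 0"
    obtain n :: nat where n: "1 / real (Suc n) < e"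
      using nat_approx_posE[OF e] by (metis of_nat_Suc)
    from K(3)[of n] y obtain z where "z \<in> K n" "dist z y < 1 / real (Suc n)" by auto
    then show "\<exists>z\<in>\<Union>n. K n. dist y z < e" using n by (metis UN_I UNIV_I dist_commute less_trans)
  qed
qed

lemma dist_measurable:
  fixes X :: "'a::metric_space set"
  assumes "compact X" "X \<noteq> {}"
  shows "(\<lambda>(x, y). dist x y) \<in> borel_measurable (restrict_space borel X \<Otimes>\<^sub>M restrict_space borel X)"
proof -
  obtain D where D: "D \<subseteq> X" "countable D" "\<And>y e. y \<in> X \<Longrightarrow> e > 0 \<Longrightarrow> \<exists>z\<in>D. dist y z < e"
    using compact_dense_countable[OF assms(1)] by blast
  have eq: "dist x y = real_of_ereal (SUP z\<in>D. ereal \<bar>dist x z - dist y z\<bar>)" if xy: "x \<in> X" "y \<in> X" for x y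
  proof -
    have le: "(SUP z\<in>D. ereal \<bar>dist x z - dist y z\<bar>) \<le> ereal (dist x y)"
    proof (rule SUP_least)
      fix z show "ereal \<bar>dist x z - dist y z\<bar> \<le> ereal (dist x y)"
        using dist_triangle[of x z y] dist_triangle[of y z x] by (simp add: dist_commute abs_le_iff)
    qed
    have ge: "ereal (dist x y) \<le> (SUP z\<in>D. ereal \<bar>dist x z - dist y z\<bar>)"
    proof (rule ereal_le_epsilon2)
      fix e :: real assume e: "0 < e"
      obtain z where z: "z \<in> D" "dist y z < e / 2" using D(3)[OF xy(2), of "e/2"] e by auto
      have "dist x y \<le> \<bar>dist x z - dist y z\<bar> + e"
        using dist_triangle[of x y z] z by (auto simp: dist_commute abs_if)
      then have "ereal (dist x y) \<le> ereal \<bar>dist x z - dist y z\<bar> + ereal e" by simp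
      also have "\<dots> \<le> (SUP z\<in>D. ereal \<bar>dist x z - dist y z\<bar>) + ereal e"
        by (intro add_right_mono SUP_upper z(1))
      finally show "ereal (dist x y) \<le> (SUP z\<in>D. ereal \<bar>dist x z - dist y z\<bar>) + ereal e" .
    qed
    from le ge show ?thesis by simp
  qed
  have [measurable]: "(\<lambda>x. dist x z) \<in> borel_measurable (restrict_space borel X)" for z
    by (intro borel_measurable_continuous_on_restrict continuous_intros)
  have "(\<lambda>w. real_of_ereal (SUP z\<in>D. ereal \<bar>dist (fst w) z - dist (snd w) z\<bar>))
      \<in> borel_measurable (restrict_space borel X \<Otimes>\<^sub>M restrict_space borel X)"
    using D(2) by measurable
  then show ?thesis
    by (subst measurable_cong[where g="\<lambda>w. real_of_ereal (SUP z\<in>D. ereal \<bar>dist (fst w) z - dist (snd w) z\<bar>)"])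
       (clarsimp simp: space_pair_measure space_restrict_space, rule eq, auto)
qed

lemma isometry_continuous:
  assumes "isometry_of X h" shows "continuous_on X h"
  using assms unfolding isometry_of_def continuous_on_iff by (metis)

theorem proposition2p4:
  fixes X :: "'a::metric_space set" and M :: "'a measure"
  assumes "X \<noteq> {}" and "compact X" and "homogeneous X"
    and "prob_space M"
    and "space M = X" and "sets M = sets (restrict_space borel X)"
    and "\<And>f A. isometry_of X f \<Longrightarrow> A \<in> sets M \<Longrightarrow> emeasure M (f -` A \<inter> X) = emeasure M A"
  shows "(integral\<^sup>L (M \<Otimes>\<^sub>M M) (\<lambda>(x, y). dist x y) = diameter X / 2) \<longleftrightarrow> strictly_antipodal X"
proof -
  note ne = assms(1) and cX = assms(2) and hom = assms(3) and spM = assms(5) and setsM = assms(6)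
    and inv = assms(7)
  interpret prob_space M using assms(4) .
  interpret P: pair_prob_space M M
    using assms(4) by (simp add: pair_prob_space_def pair_sigma_finite_def prob_space_imp_sigma_finite)
  define D where "D = diameter X"
  have bX: "bounded X" using cX by (rule compact_imp_bounded)
  have distD: "dist x y \<le> D" if "x \<in> X" "y \<in> X" for x y
    unfolding D_def by (rule diameter_bounded_bound[OF bX that])
  have D0: "0 \<le> D" using distD ne by (metis all_not_in_conv zero_le_dist order_trans)
  have cbor: "X \<in> sets borel" using cX by (simp add: compact_imp_closed)
  have dmeas: "(\<lambda>y. dist x y) \<in> borel_measurable M" for x
    using borel_measurable_continuous_on_restrict[of X "\<lambda>y. dist x y"]
    by (simp add: measurable_cong_sets[OF setsM refl] continuous_intros)
  have dint: "integrable M (\<lambda>y. dist x y)" if "x \<in> X" for x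
    by (rule integrable_const_bound[where B=D]) (use that distD spM dmeas in auto)
  have pmeas: "(\<lambda>(x, y). dist x y) \<in> borel_measurable (M \<Otimes>\<^sub>M M)"
    using dist_measurable[OF cX ne]
    by (simp add: measurable_cong_sets[OF sets_pair_measure_cong[OF setsM setsM] refl])
  have pint: "integrable (M \<Otimes>\<^sub>M M) (\<lambda>(x, y). dist x y)"
    by (rule P.integrable_const_bound[where B=D])
       (use pmeas distD spM in \<open>auto simp: space_pair_measure\<close>)
  have dint': "integrable M (\<lambda>y. dist y x)" if "x \<in> X" for x
    using dint[OF that] by (simp add: dist_commute)
  define f where "f x = (\<integral>y. dist x y \<partial>M)" for x
  have f_iso: "f (h x) = f x" if h: "isometry_of X h" and x: "x \<in> X" for h x
  proof -
    have hX: "h \<in> X \<rightarrow> X" using h unfolding isometry_of_def bij_betw_def by auto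
    have hmeas: "h \<in> measurable M M"
    proof -
      have "h \<in> measurable (restrict_space borel X) (restrict_space borel X)"
        by (rule measurable_restrict_space2)
           (use hX borel_measurable_continuous_on_restrict[OF isometry_continuous[OF h]] in \<open>auto simp: space_restrict_space\<close>)
      then show ?thesis by (simp add: measurable_cong_sets[OF setsM setsM])
    qed
    have distr: "distr M M h = M"
    proof (rule measure_eqI)
      show "sets (distr M M h) = sets M" by simp
      fix A assume "A \<in> sets (distr M M h)"
      then have A: "A \<in> sets M" by simp
      show "emeasure (distr M M h) A = emeasure M A"
        using emeasure_distr[OF hmeas A] inv[OF h A] spM by simp
    qed
    have "f (h x) = (\<integral>y. dist (h x) y \<partial>distr M M h)" by (simp add: f_def distr)
    also have "\<dots> = (\<integral>y. dist (h x) (h y) \<partial>M)" by (rule integral_distr[OF hmeas dmeas])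
    also have "\<dots> = f x" unfolding f_def
      by (rule Bochner_Integration.integral_cong[OF refl]) (use h x spM in \<open>auto simp: isometry_of_def\<close>)
    finally show ?thesis .
  qed
  obtain x0 where x0: "x0 \<in> X" using ne by auto
  have fconst: "f x = f x0" if xX: "x \<in> X" for x
  proof -
    obtain h where "isometry_of X h" "h x0 = x" using hom[unfolded homogeneous_def, rule_format, OF x0 xX] by blast
    then show ?thesis using f_iso[of h x0] x0 by simp
  qed
  have Aeq: "integral\<^sup>L (M \<Otimes>\<^sub>M M) (\<lambda>(x, y). dist x y) = f x0"
  proof -
    have "integral\<^sup>L (M \<Otimes>\<^sub>M M) (\<lambda>(x, y). dist x y) = (\<integral>x. f x \<partial>M)"
      using P.integral_fst'[OF pint] by (simp add: f_def)
    also have "\<dots> = (\<integral>x. f x0 \<partial>M)" by (rule Bochner_Integration.integral_cong[OF refl]) (use fconst spM in auto)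
    also have "\<dots> = f x0" by (simp add: prob_space)
    finally show ?thesis .
  qed
  have fsym: "(\<integral>y. dist y p \<partial>M) = f x0" if "p \<in> X" for p
    using fconst[OF that] by (simp add: f_def dist_commute)
  have antip: "antipodal X"
    unfolding antipodal_def
  proof
    fix x assume x: "x \<in> X"
    obtain a b where ab: "a \<in> X" "b \<in> X" "dist a b = D"
      using diameter_compact_attained[OF cX ne] D_def by auto
    obtain g where g: "isometry_of X g" "g a = x" using hom[unfolded homogeneous_def, rule_format, OF ab(1) x] by blast
    have gb: "g b \<in> X" using g ab unfolding isometry_of_def bij_betw_def by auto
    have "dist x (g b) = D" using g ab unfolding isometry_of_def by auto
    moreover obtain k where "isometry_of X k" "k x = g b" using hom[unfolded homogeneous_def, rule_format, OF x gb] by blast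
    ultimately show "\<exists>p. is_antipode X x p" using gb unfolding is_antipode_def D_def by blast
  qed
  show ?thesis
  proof
    assume A: "integral\<^sup>L (M \<Otimes>\<^sub>M M) (\<lambda>(x, y). dist x y) = diameter X / 2"
    then have fx0: "f x0 = D / 2" using Aeq D_def by simp
    show "strictly_antipodal X"
      unfolding strictly_antipodal_def
    proof (intro conjI antip ballI allI impI)
      fix x p y assume x: "x \<in> X" and ap: "is_antipode X x p" and y0: "y \<in> X"
      have p: "p \<in> X" "dist x p = D" using ap unfolding is_antipode_def D_def by auto
      define g where "g y = dist x y + dist y p - D" for y
      have gnn: "0 \<le> g y" for y using dist_triangle[of x p y] p by (simp add: g_def)
      have gint: "integrable M g" unfolding g_def
        using dint[OF x] dint'[OF p(1)] by (auto intro!: Bochner_Integration.integrable_diff Bochner_Integration.integrable_add)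
      have "integral\<^sup>L M g = f x + (\<integral>y. dist y p \<partial>M) - D"
        unfolding g_def f_def
        using dint[OF x] dint'[OF p(1)] by (simp add: prob_space)
      also have "\<dots> = 0" using fconst[OF x] fsym[OF p(1)] fx0 by simp
      finally have "AE y in M. g y = 0"
        using integral_nonneg_eq_0_iff_AE[OF gint] gnn by simp
      then obtain N where N: "{y \<in> space M. g y \<noteq> 0} \<subseteq> N" "emeasure M N = 0" "N \<in> sets M"
        by (rule AE_E) auto
      show "diameter X = dist x y + dist y p"
      proof (rule ccontr)
        assume "diameter X \<noteq> dist x y + dist y p"
        then have c: "g y > 0" using gnn[of y] by (simp add: g_def D_def)
        define r where "r = g y / 2"
        have r: "r > 0" using c by (simp add: r_def)
        have sub: "ball y r \<inter> X \<subseteq> N"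
        proof
          fix z assume z: "z \<in> ball y r \<inter> X"
          have "g z \<ge> g y - 2 * dist y z"
            using dist_triangle[of x y z] dist_triangle[of y p z] by (simp add: g_def dist_commute)
          then have "g z > 0" using z by (simp add: r_def)
          then show "z \<in> N" using N(1) z spM by auto
        qed
        \<comment> \<open>balls have positive measure\<close>
        have bs: "ball z r \<inter> X \<in> sets M" for z
          using cbor by (simp add: setsM sets_restrict_space_iff)
        have beq: "emeasure M (ball z r \<inter> X) = emeasure M (ball y r \<inter> X)" if z: "z \<in> X" for z
        proof -
          obtain h where h: "isometry_of X h" "h y = z" using hom[unfolded homogeneous_def, rule_format, OF y0 z] by blast
          have "h -` (ball z r \<inter> X) \<inter> X = ball y r \<inter> X"
            using h y0 unfolding isometry_of_def bij_betw_def by auto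
          then show ?thesis using inv[OF h(1) bs[of z]] by simp
        qed
        have cov: "X \<subseteq> (\<Union>z\<in>X. ball z r)" using r by auto
        obtain K where K: "K \<subseteq> X" "finite K" "X \<subseteq> (\<Union>z\<in>K. ball z r)"
          by (rule compactE_image[OF cX _ cov]) auto
        have "1 = emeasure M X" using spM emeasure_space_1 by simp
        also have "\<dots> \<le> emeasure M (\<Union>z\<in>K. ball z r \<inter> X)"
          using K(3) by (intro emeasure_mono[OF _ sets.finite_UN[OF K(2)]]) (auto intro: bs)
        also have "\<dots> \<le> (\<Sum>z\<in>K. emeasure M (ball z r \<inter> X))"
          using bs K(2) by (intro emeasure_subadditive_finite) auto
        also have "\<dots> = (\<Sum>z\<in>K. emeasure M (ball y r \<inter> X))"
          using beq K(1) by (intro sum.cong) auto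
        also have "\<dots> \<le> (\<Sum>z\<in>K. emeasure M N)"
          using sub N(3) by (intro sum_mono emeasure_mono) auto
        also have "\<dots> = 0" using N(2) by simp
        finally show False by simp
      qed
    qed
  next
    assume sa: "strictly_antipodal X"
    then obtain p where ap: "is_antipode X x0 p" using x0 unfolding strictly_antipodal_def antipodal_def by blast
    have p: "p \<in> X" using ap unfolding is_antipode_def by auto
    have eq: "D = dist x0 y + dist y p" if "y \<in> X" for y
      using sa ap x0 that unfolding strictly_antipodal_def D_def by blast
    have "D = (\<integral>y. D \<partial>M)" by (simp add: prob_space)
    also have "\<dots> = (\<integral>y. dist x0 y + dist y p \<partial>M)"
      by (rule Bochner_Integration.integral_cong[OF refl]) (use eq spM in auto)
    also have "\<dots> = f x0 + (\<integral>y. dist y p \<partial>M)"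
      unfolding f_def using dint[OF x0] dint'[OF p] by simp
    also have "\<dots> = 2 * f x0" using fsym[OF p] by simp
    finally show "integral\<^sup>L (M \<Otimes>\<^sub>M M) (\<lambda>(x, y). dist x y) = diameter X / 2"
      using Aeq D_def by simp
  qed
qed

end
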